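(* Let $G$ be a finite Abelian group (written additively), and let $S(G)=\{x=(x_g)_{g\in G}\in\mathbb{R}^G:\ x_g\ge 0\ \forall g,\ \sum_{g\in G}x_g=1\}$ be the simplex of probability measures on $G$. Define the quadratic stochastic operator $V:S(G)\to S(G)$ by $$(Vx)_h=\sum_{f,g\in G,\ f+g=h}x_f x_g\qquad (h\in G).$$ Let $\nu\in S(G)$ be the Haar measure (uniform distribution) on $G$, i.e. $\nu_g=1/|G|$ for all $g\in G$, which is the centre of the simplex $S(G)$. Then almost all orbits of $V$ tend to the centre of the simplex: for Lebesgue-almost every $x\in S(G)$ (with respect to Lebesgue measure on the $(|G|-1)$-dimensional simplex), $\lim_{k\to\infty}V^k x=\nu$.
   Context: $V^k$ denotes the $k$-th iterate of $V$, with $V^0x=x$ and $V^{k+1}x=V(V^kx)$. *)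

theory Defs
  imports "HOL-Analysis.Analysis" "HOL-Probability.Probability"
begin

definition prob_simplex :: "('g::finite \<Rightarrow> real) set" where
  "prob_simplex = {x. (\<forall>g. 0 \<le> x g) \<and> (\<Sum>g\<in>UNIV. x g) = 1}"

definition qso :: "('g::{ab_group_add,finite} \<Rightarrow> real) \<Rightarrow> ('g \<Rightarrow> real)" where
  "qso x = (\<lambda>h. \<Sum>(f, g)\<in>{(f, g). f + g = h}. x f * x g)"

definition haar :: "'g::finite \<Rightarrow> real" where
  "haar = (\<lambda>g. 1 / real CARD('g))"

text \<open>Standard affine chart of the simplex: drop the coordinate g0.
  Lebesgue measure on the (|G|-1)-dimensional simplex is (up to a constant factor)
  the push-forward of Lebesgue measure on R^(G-{g0}) restricted to this corner.\<close>
definition chart_dom :: "'g::finite \<Rightarrow> ('g \<Rightarrow> real) set" where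
  "chart_dom g0 = {y. (\<forall>g. g \<noteq> g0 \<longrightarrow> 0 \<le> y g) \<and> (\<Sum>g\<in>UNIV - {g0}. y g) \<le> 1}"

definition chart_lift :: "'g::finite \<Rightarrow> ('g \<Rightarrow> real) \<Rightarrow> ('g \<Rightarrow> real)" where
  "chart_lift g0 y = (\<lambda>g. if g = g0 then 1 - (\<Sum>g'\<in>UNIV - {g0}. y g') else y g)"

end

theory Submission
  imports Defs
begin

lemma fun_tendsto:
  fixes f :: "'a \<Rightarrow> 'b \<Rightarrow> 'c::topological_space"
  assumes "\<And>i. ((\<lambda>k. f k i) \<longlongrightarrow> l i) F"
  shows "(f \<longlongrightarrow> l) F"
  using limitin_componentwise[of "\<lambda>_. euclidean" UNIV f l F] assms
  by (simp add: euclidean_product_topology)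

lemma qso_eq: "qso x h = (\<Sum>f\<in>UNIV. x f * x (h - f))"
  for x :: "'g::{ab_group_add,finite} \<Rightarrow> real"
proof -
  have e: "{(f, g). f + g = h} = (\<lambda>f. (f, h - f)) ` UNIV"
    by (auto simp: image_iff algebra_simps)
  have "inj (\<lambda>f::'g. (f, h - f))" by (auto simp: inj_on_def)
  then show ?thesis unfolding qso_def e by (simp add: sum.reindex)
qed

lemma shift_sum: "(\<Sum>f\<in>UNIV. y (h - f)) = (\<Sum>f\<in>UNIV. (y f :: real))"
  for y :: "'g::{ab_group_add,finite} \<Rightarrow> real"
  by (rule sum.reindex_bij_witness[where i="\<lambda>f. h - f" and j="\<lambda>f. h - f"]) auto

lemma contract:
  fixes p y :: "'g::{ab_group_add,finite} \<Rightarrow> real"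
  assumes sp: "sum p UNIV = 1" and sy: "sum y UNIV = 1" and yd: "\<forall>g. \<delta> \<le> y g"
  shows "(\<Sum>h\<in>UNIV. \<bar>(\<Sum>f\<in>UNIV. p f * y (h - f)) - 1 / real CARD('g)\<bar>)
         \<le> (1 - real CARD('g) * \<delta>) * (\<Sum>f\<in>UNIV. \<bar>p f - 1 / real CARD('g)\<bar>)"
proof -
  let ?n = "real CARD('g)"
  have n0: "?n > 0" by simp
  have sn: "(\<Sum>f::'g\<in>UNIV. 1 / ?n) = 1" using n0 by simp
  have key: "(\<Sum>f\<in>UNIV. p f * y (h - f)) - 1/?n = (\<Sum>f\<in>UNIV. (p f - 1/?n) * (y (h - f) - \<delta>))" for h
  proof -
    have "(\<Sum>f\<in>UNIV. (p f - 1/?n) * (y (h - f) - \<delta>)) =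
       (\<Sum>f\<in>UNIV. p f * y (h-f)) - (1/?n) * (\<Sum>f\<in>UNIV. y (h-f)) - \<delta> * (\<Sum>f\<in>UNIV. p f) + \<delta> * (\<Sum>f::'g\<in>UNIV. 1/?n)"
      by (simp add: algebra_simps sum.distrib sum_subtractf sum_distrib_left)
    also have "\<dots> = (\<Sum>f\<in>UNIV. p f * y (h-f)) - 1/?n"
      using shift_sum[of y h] sy sp sn by simp
    finally show ?thesis by simp
  qed
  have b: "\<bar>(\<Sum>f\<in>UNIV. p f * y (h - f)) - 1/?n\<bar> \<le> (\<Sum>f\<in>UNIV. \<bar>p f - 1/?n\<bar> * (y (h - f) - \<delta>))" for h
  proof -
    have "\<bar>(\<Sum>f\<in>UNIV. p f * y (h - f)) - 1/?n\<bar> \<le> (\<Sum>f\<in>UNIV. \<bar>(p f - 1/?n) * (y (h - f) - \<delta>)\<bar>)"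
      unfolding key by (rule sum_abs)
    also have "\<dots> = (\<Sum>f\<in>UNIV. \<bar>p f - 1/?n\<bar> * (y (h - f) - \<delta>))"
      using yd by (intro sum.cong) (auto simp: abs_mult)
    finally show ?thesis .
  qed
  have "(\<Sum>h\<in>UNIV. \<bar>(\<Sum>f\<in>UNIV. p f * y (h - f)) - 1/?n\<bar>) \<le> (\<Sum>h\<in>UNIV. \<Sum>f\<in>UNIV. \<bar>p f - 1/?n\<bar> * (y (h - f) - \<delta>))"
    by (intro sum_mono b)
  also have "\<dots> = (\<Sum>f\<in>UNIV. \<Sum>h\<in>UNIV. \<bar>p f - 1/?n\<bar> * (y (h - f) - \<delta>))"
    by (rule sum.swap)
  also have "\<dots> = (\<Sum>f\<in>UNIV. \<bar>p f - 1/?n\<bar> * (1 - ?n * \<delta>))"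
  proof (intro sum.cong refl)
    fix f
    have "(\<Sum>h\<in>UNIV. y (h - f)) = 1"
      using sy by (subst sum.reindex_bij_witness[where i="\<lambda>h. h + f" and j="\<lambda>h. h - f"]) auto
    then show "(\<Sum>h\<in>UNIV. \<bar>p f - 1/?n\<bar> * (y (h - f) - \<delta>)) = \<bar>p f - 1/?n\<bar> * (1 - ?n * \<delta>)"
      by (simp add: sum_distrib_left[symmetric] sum_subtractf)
  qed
  also have "\<dots> = (1 - ?n * \<delta>) * (\<Sum>f\<in>UNIV. \<bar>p f - 1/?n\<bar>)"
    by (simp add: sum_distrib_left mult.commute)
  finally show ?thesis .
qed


lemma qso_sum:
  fixes z :: "'g::{ab_group_add,finite} \<Rightarrow> real"
  assumes "sum z UNIV = 1"
  shows "sum (qso z) UNIV = 1"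
proof -
  have "sum (qso z) UNIV = (\<Sum>h\<in>UNIV. \<Sum>f\<in>UNIV. z f * z (h - f))" by (simp add: qso_eq)
  also have "\<dots> = (\<Sum>f\<in>UNIV. \<Sum>h\<in>UNIV. z f * z (h - f))" by (rule sum.swap)
  also have "\<dots> = (\<Sum>f\<in>UNIV. z f)"
  proof (intro sum.cong refl)
    fix f
    have "(\<Sum>h\<in>UNIV. z (h - f)) = 1"
      using assms by (subst sum.reindex_bij_witness[where i="\<lambda>h. h + f" and j="\<lambda>h. h - f"]) auto
    then show "(\<Sum>h\<in>UNIV. z f * z (h - f)) = z f" by (simp add: sum_distrib_left[symmetric])
  qed
  finally show ?thesis using assms by simp
qed

lemma qso_min:
  fixes z :: "'g::{ab_group_add,finite} \<Rightarrow> real"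
  assumes "sum z UNIV = 1" "\<forall>g. \<delta> \<le> z g" "\<delta> \<ge> 0"
  shows "\<delta> \<le> qso z h"
proof -
  have "\<delta> = (\<Sum>f\<in>UNIV. z f * \<delta>)" using assms(1) by (simp add: sum_distrib_right[symmetric])
  also have "\<dots> \<le> (\<Sum>f\<in>UNIV. z f * z (h - f))"
    using assms by (intro sum_mono mult_left_mono) (auto intro: order_trans)
  finally show ?thesis by (simp add: qso_eq)
qed

lemma iterate:
  fixes x :: "'g::{ab_group_add,finite} \<Rightarrow> real"
  assumes sx: "sum x UNIV = 1" and mx: "\<forall>g. \<delta> \<le> x g" and d0: "\<delta> > 0"
  shows "(\<lambda>k. (qso^^k) x) \<longlonglongrightarrow> haar"
proof -
  let ?n = "real CARD('g)"
  let ?c = "1 - ?n * \<delta>"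
  define D where "D z = (\<Sum>f\<in>UNIV. \<bar>z f - 1 / ?n\<bar>)" for z :: "'g \<Rightarrow> real"
  have inv: "sum ((qso^^k) x) UNIV = 1 \<and> (\<forall>g. \<delta> \<le> (qso^^k) x g)" for k
    by (induction k) (use sx mx d0 qso_sum in \<open>auto intro!: qso_min\<close>)
  have "?n * \<delta> = (\<Sum>g::'g\<in>UNIV. \<delta>)" by simp
  also have "\<dots> \<le> sum x UNIV" using mx by (intro sum_mono) auto
  finally have c0: "?c \<ge> 0" using sx by simp
  have c1: "?c < 1" using d0 by simp
  have Dk: "D ((qso^^k) x) \<le> ?c ^ k * D x" for k
  proof (induction k)
    case 0 then show ?case by simp
  next
    case (Suc k)
    have "D ((qso^^Suc k) x) \<le> ?c * D ((qso^^k) x)"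
      using contract[of "(qso^^k) x" "(qso^^k) x" \<delta>] inv[of k]
      by (simp add: D_def qso_eq)
    also have "\<dots> \<le> ?c * (?c ^ k * D x)" using Suc c0 by (intro mult_left_mono) auto
    finally show ?case by (simp add: mult.assoc)
  qed
  have lim0: "(\<lambda>k. ?c ^ k * D x) \<longlonglongrightarrow> 0"
    using c0 c1 by (intro tendsto_mult_left_zero LIMSEQ_power_zero) auto
  show ?thesis
  proof (rule fun_tendsto)
    fix g
    have "(\<lambda>k. (qso^^k) x g - 1 / ?n) \<longlonglongrightarrow> 0"
    proof (rule Lim_null_comparison[OF _ lim0])
      show "\<forall>\<^sub>F k in sequentially. norm ((qso^^k) x g - 1 / ?n) \<le> ?c ^ k * D x"
      proof (intro always_eventually allI)
        fix k
        have "\<bar>(qso^^k) x g - 1 / ?n\<bar> \<le> D ((qso^^k) x)"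
          unfolding D_def by (rule member_le_sum) auto
        then show "norm ((qso^^k) x g - 1 / ?n) \<le> ?c ^ k * D x" using Dk[of k] by simp
      qed
    qed
    then show "(\<lambda>k. (qso^^k) x g) \<longlonglongrightarrow> haar g"
      by (simp add: haar_def LIM_zero_iff)
  qed
qed


lemma qso_pos:
  fixes x :: "'g::{ab_group_add,finite} \<Rightarrow> real"
  assumes nn: "\<forall>g. 0 \<le> x g" and p: "\<forall>g. g \<noteq> g0 \<longrightarrow> 0 < x g"
    and c: "0 < x g0 \<or> CARD('g) \<ge> 3"
  shows "0 < qso x h"
proof -
  obtain f0 where f0: "0 < x f0" "0 < x (h - f0)"
  proof (cases "0 < x g0")
    case True
    then have "\<forall>g. 0 < x g" using p by (metis)
    then show ?thesis using that by blast
  next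
    case False
    then have "CARD('g) \<ge> 3" using c by auto
    moreover have "card {g0, h - g0} \<le> 2" by (simp add: card_insert_le_m1)
    ultimately have "{g0, h - g0} \<noteq> UNIV" by (metis card_insert_le_m1 numeral_le_iff semiring_norm(69) not_less_eq_eq numeral_3_eq_3 numeral_2_eq_2 le_antisym le_trans nle_le)
    then obtain f where "f \<notin> {g0, h - g0}" by blast
    then have "f \<noteq> g0" "h - f \<noteq> g0" by (auto simp: algebra_simps)
    then show ?thesis using that p by blast
  qed
  have "0 < x f0 * x (h - f0)" using f0 by simp
  also have "\<dots> \<le> (\<Sum>f\<in>UNIV. x f * x (h - f))"
    by (rule member_le_sum[where f="\<lambda>f. x f * x (h - f)"]) (use nn in auto)
  finally show ?thesis by (simp add: qso_eq)
qed

lemma null_coord: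
  fixes I :: "'a set"
  assumes "finite I" "g \<in> I"
  shows "AE y in (\<Pi>\<^sub>M i\<in>I. lborel). y g \<noteq> (c::real)"
proof -
  interpret product_sigma_finite "\<lambda>_::'a. lborel :: real measure"
    by unfold_locales
  let ?N = "Pi\<^sub>E I (\<lambda>i. if i = g then {c} else UNIV)"
  have sN: "?N \<in> sets (\<Pi>\<^sub>M i\<in>I. lborel)"
    using assms by (intro sets_PiM_I_finite) auto
  have "emeasure (\<Pi>\<^sub>M i\<in>I. lborel) ?N = (\<Prod>i\<in>I. emeasure lborel (if i = g then {c} else UNIV))"
    using assms by (intro emeasure_PiM) auto
  also have "\<dots> = 0" using assms by (intro prod_zero) auto
  finally have "?N \<in> null_sets (\<Pi>\<^sub>M i\<in>I. lborel)" using sN by auto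
  then show ?thesis
    by (rule AE_I') (auto simp: space_PiM PiE_iff extensional_def)
qed

theorem theorem2:
  fixes g0 :: "'g::{ab_group_add,finite}"
  shows "AE y in (\<Pi>\<^sub>M g\<in>UNIV - {g0}. lborel).
           y \<in> chart_dom g0 \<longrightarrow>
           (\<lambda>k. (qso ^^ k) (chart_lift g0 y)) \<longlonglongrightarrow> (haar :: 'g \<Rightarrow> real)"
proof -
  let ?I = "UNIV - {g0}"
  have "AE y in (\<Pi>\<^sub>M g\<in>?I. lborel). \<forall>g\<in>?I. y g \<noteq> (0::real) \<and> y g \<noteq> 1"
    apply (intro AE_finite_allI AE_conjI)
    apply simp
    using null_coord[of ?I _ 0] apply (simp)
    using null_coord[of ?I _ 1] apply (simp)
    done
  then show ?thesis
  proof (rule AE_mp, intro AE_I2 impI)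
    fix y :: "'g \<Rightarrow> real"
    assume P: "\<forall>g\<in>?I. y g \<noteq> 0 \<and> y g \<noteq> 1" and dom: "y \<in> chart_dom g0"
    define x where "x = chart_lift g0 y"
    have sI: "(\<Sum>g\<in>?I. x g) = (\<Sum>g\<in>?I. y g)"
      by (intro sum.cong) (auto simp: x_def chart_lift_def)
    have sx: "sum x UNIV = 1"
      using sum.remove[of UNIV g0 x] sI by (simp add: x_def chart_lift_def)
    have nn: "\<forall>g. 0 \<le> x g" using dom by (auto simp: x_def chart_lift_def chart_dom_def)
    have p: "\<forall>g. g \<noteq> g0 \<longrightarrow> 0 < x g"
      using dom P by (force simp: x_def chart_lift_def chart_dom_def order_le_less)
    have c: "0 < x g0 \<or> CARD('g) \<ge> 3"
    proof (rule ccontr)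
      assume "\<not> ?thesis"
      then have a: "x g0 \<le> 0" "CARD('g) \<le> 2" by auto
      then have s1: "(\<Sum>g\<in>?I. y g) = 1" using nn[rule_format, of g0]
        by (simp add: x_def chart_lift_def)
      have "card ?I \<le> 1" using a(2) by (simp add: card_Diff_singleton)
      moreover have "?I \<noteq> {}" using s1 by (metis sum.empty zero_neq_one)
      ultimately have "card ?I = 1" by (metis One_nat_def Suc_leI card_gt_0_iff finite le_antisym)
      then obtain a where "?I = {a}" by (rule card_1_singletonE)
      then show False using s1 P by auto
    qed
    have pos: "\<forall>h. 0 < qso x h" using qso_pos[OF nn p c] by blast
    define \<delta> where "\<delta> = Min (range (qso x))"
    have d0: "\<delta> > 0" unfolding \<delta>_def using pos by (subst Min_gr_iff) auto
    have md: "\<forall>g. \<delta> \<le> qso x g" unfolding \<delta>_def by auto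
    have "(\<lambda>k. (qso^^k) (qso x)) \<longlonglongrightarrow> haar"
      by (rule iterate[OF qso_sum[OF sx] md d0])
    then have "(\<lambda>k. (qso^^(Suc k)) x) \<longlonglongrightarrow> haar" by (simp add: funpow_Suc_right del: funpow.simps)
    then show "(\<lambda>k. (qso ^^ k) (chart_lift g0 y)) \<longlonglongrightarrow> haar"
      unfolding x_def by (rule LIMSEQ_imp_Suc)
  qed
qed

end
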